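(* Let $n\ge1$ and let $X$ be uniformly distributed on the unit cube $[0,1]^n$, with $\mathbb R^n$ carrying the Euclidean metric and pairs the Manhattan metric. Then \[ \frac{\sqrt n}{3}\le\mathrm{eVar}(X)\le\sqrt{n/6}. \]
   Context: For probability measures $\mu,\nu$ with finite first moments on a metric space $(S,\rho)$, $e(\mu,\nu)=\inf_\gamma\int\rho\,d\gamma$ over all couplings $\gamma$ of $\mu,\nu$. Pairs of points of $\mathbb R^n$ carry the metric $d[(x,y),(u,v)]=|x-u|+|y-v|$ ($|\cdot|$ Euclidean norm). The earth mover's variance is $\mathrm{eVar}(X)=e\big[(X,X),(X_2,X_3)\big]$, the distance w.r.t. $d$ between the law of $(X,X)$ and the law of $(X_2,X_3)$, where $X_2,X_3$ are independent copies of $X$. *)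

theory Defs
  imports "HOL-Probability.Probability"
begin

definition couplings :: "'a measure \<Rightarrow> 'b measure \<Rightarrow> ('a \<times> 'b) measure set" where
  "couplings \<mu> \<nu> = {\<gamma>. sets \<gamma> = sets (\<mu> \<Otimes>\<^sub>M \<nu>) \<and> prob_space \<gamma> \<and>
      distr \<gamma> \<mu> fst = \<mu> \<and> distr \<gamma> \<nu> snd = \<nu>}"

definition emd :: "('a \<Rightarrow> 'a \<Rightarrow> real) \<Rightarrow> 'a measure \<Rightarrow> 'a measure \<Rightarrow> ennreal" where
  "emd \<rho> \<mu> \<nu> = (INF \<gamma>\<in>couplings \<mu> \<nu>. \<integral>\<^sup>+ z. ennreal (\<rho> (fst z) (snd z)) \<partial>\<gamma>)"

definition dpair :: "('a::metric_space \<times> 'a) \<Rightarrow> ('a \<times> 'a) \<Rightarrow> real" where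
  "dpair p q = dist (fst p) (fst q) + dist (snd p) (snd q)"

definition eVar :: "('a::metric_space) measure \<Rightarrow> ennreal" where
  "eVar M = emd dpair (distr M (M \<Otimes>\<^sub>M M) (\<lambda>x. (x, x))) (M \<Otimes>\<^sub>M M)"

end

theory Submission
  imports Defs "HOL-Analysis.Analysis"
begin


lemma Basis_sum_nth[simp]: "(\<Sum>x\<in>(Basis::(real^'n) set). x $ i) = 1"
proof -
  have B: "(Basis::(real^'n) set) = range (\<lambda>j. axis j 1)" by (auto simp: Basis_vec_def)
  have inj: "inj (\<lambda>j::'n. axis j (1::real))" by (auto simp: inj_def axis_eq_axis)
  have "(\<Sum>x\<in>(Basis::(real^'n) set). x $ i) = (\<Sum>j\<in>UNIV. axis j (1::real) $ i)"
    unfolding B by (subst sum.reindex[OF inj]) simp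
  also have "\<dots> = (\<Sum>j\<in>UNIV. if j = i then 1 else 0)" by (intro sum.cong) (auto simp: axis_def)
  also have "\<dots> = 1" by simp
  finally show ?thesis .
qed

lemma One_nth[simp]: "(One::real^'n) $ i = 1" by simp

lemma cube_emeasure: "emeasure lborel (cbox (0::real^'n) One) = 1"
proof -
  have ne: "cbox (0::real^'n) One \<noteq> {}" by (simp add: mem_box_cart)
  have "measure lborel (cbox (0::real^'n) One) = 1"
    using content_cbox_cart[OF ne] by simp
  then show ?thesis
    using emeasure_lborel_cbox_finite[of "0::real^'n" One]
    by (simp add: emeasure_eq_ennreal_measure)
qed

lemma U_prob: "prob_space (uniform_measure lborel (cbox (0::real^'n) One))"
  by (rule prob_space_uniform_measure) (simp_all add: cube_emeasure)

lemma set_le_borel: "{x::real^'n. x $ i \<le> a} \<in> sets borel"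
  by (intro borel_closed closed_Collect_le continuous_intros)

lemma U_cdf:
  "measure (uniform_measure lborel (cbox (0::real^'n) One)) {x. x $ i \<le> a}
     = (if a < 0 then 0 else min a 1)"
proof -
  let ?C = "cbox (0::real^'n) One"
  have m1: "measure lborel ?C = 1" using cube_emeasure[where 'n='n] by (simp add: measure_def)
  have "measure (uniform_measure lborel ?C) {x. x $ i \<le> a} = measure lborel (?C \<inter> {x. x $ i \<le> a}) / measure lborel ?C"
    by (rule measure_uniform_measure) (simp_all add: cube_emeasure set_le_borel)
  also have "\<dots> = measure lborel (?C \<inter> {x. x $ i \<le> a})" using m1 by simp
  also have "\<dots> = (if a < 0 then 0 else min a 1)"
  proof (cases "a < 0")
    case True
    then have "?C \<inter> {x. x $ i \<le> a} = {}" by (auto simp: mem_box_cart) (metis not_le order.trans)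
    then show ?thesis using True by simp
  next
    case False
    let ?b = "(\<chi> j. if j = i then min a 1 else 1) :: real^'n"
    have eq: "?C \<inter> {x. x $ i \<le> a} = cbox 0 ?b"
    proof (rule set_eqI)
      fix x :: "real^'n"
      show "x \<in> ?C \<inter> {x. x $ i \<le> a} \<longleftrightarrow> x \<in> cbox 0 ?b"
      proof
        assume "x \<in> ?C \<inter> {x. x $ i \<le> a}"
        then have h: "\<And>j. 0 \<le> x $ j \<and> x $ j \<le> 1" "x $ i \<le> a" by (auto simp: mem_box_cart)
        show "x \<in> cbox 0 ?b" unfolding mem_box_cart
        proof
          fix j show "0 $ j \<le> x $ j \<and> x $ j \<le> ?b $ j" using h(1)[of j] h(2) by (cases "j = i") auto
        qed
      next
        assume "x \<in> cbox 0 ?b"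
        then have h: "\<And>j. 0 \<le> x $ j \<and> x $ j \<le> ?b $ j" by (auto simp: mem_box_cart)
        have "x $ i \<le> a" using h[of i] by simp
        moreover have "0 \<le> x $ j \<and> x $ j \<le> 1" for j using h[of j] by (cases "j = i") auto
        ultimately show "x \<in> ?C \<inter> {x. x $ i \<le> a}" by (auto simp: mem_box_cart)
      qed
    qed
    have "0 \<in> cbox 0 ?b" using False unfolding mem_box_cart by auto
    then have ne: "cbox 0 ?b \<noteq> {}" by blast
    have "measure lborel (cbox 0 ?b) = (\<Prod>j\<in>UNIV. if j = i then min a 1 else 1)"
      using content_cbox_cart[OF ne] by simp
    also have "\<dots> = min a 1" by (simp add: prod.delta)
    finally show ?thesis using eq False by simp
  qed
  finally show ?thesis .
qed

lemma nth_borel: "(\<lambda>x::real^'n. x $ i) \<in> borel_measurable borel"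
  by (intro borel_measurable_continuous_onI continuous_intros)

lemma nth_meas_U: "(\<lambda>x::real^'n. x $ i) \<in> measurable (uniform_measure lborel (cbox (0::real^'n) One)) lborel"
  using nth_borel by (simp add: measurable_cong_sets[OF sets_uniform_measure refl])

lemma W_prob: "prob_space (uniform_measure lborel {0..1::real})"
  by (rule prob_space_uniform_measure) simp_all

lemma U_marg: "distr (uniform_measure lborel (cbox (0::real^'n) One)) lborel (\<lambda>x. x $ i)
   = uniform_measure lborel {0..1::real}"
proof (rule cdf_unique)
  let ?U = "uniform_measure lborel (cbox (0::real^'n) One)"
  interpret U: prob_space ?U by (rule U_prob)
  show "real_distribution (distr ?U lborel (\<lambda>x. x $ i))"
    unfolding real_distribution_def real_distribution_axioms_def
    using U.prob_space_distr[OF nth_meas_U] by simp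
  show "real_distribution (uniform_measure lborel {0..1::real})"
    unfolding real_distribution_def real_distribution_axioms_def
    using W_prob by simp
  show "cdf (distr ?U lborel (\<lambda>x. x $ i)) = cdf (uniform_measure lborel {0..1::real})"
  proof
    fix a :: real
    have "cdf (distr ?U lborel (\<lambda>x. x $ i)) a = measure ?U ((\<lambda>x. x $ i) -` {..a} \<inter> space ?U)"
      unfolding cdf_def by (rule measure_distr[OF nth_meas_U]) simp
    also have "(\<lambda>x. x $ i) -` {..a} \<inter> space ?U = {x. x $ i \<le> a}" by auto
    also have "measure ?U {x. x $ i \<le> a} = (if a < 0 then 0 else min a 1)" by (rule U_cdf)
    also have "\<dots> = cdf (uniform_measure lborel {0..1::real}) a"
    proof -
      have "cdf (uniform_measure lborel {0..1::real}) a = measure lborel ({0..1} \<inter> {..a}) / measure lborel {0..1::real}"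
        unfolding cdf_def by (rule measure_uniform_measure) simp_all
      also have "\<dots> = measure lborel ({0..1} \<inter> {..a})" by simp
      also have "\<dots> = (if a < 0 then 0 else min a 1)"
      proof (cases "a < 0")
        case True then have "{0..1::real} \<inter> {..a} = {}" by auto
        then show ?thesis using True by simp
      next
        case False then have "{0..1::real} \<inter> {..a} = {0..min a 1}" by auto
        then show ?thesis using False by simp
      qed
      finally show ?thesis by simp
    qed
    finally show "cdf (distr ?U lborel (\<lambda>x. x $ i)) a = cdf (uniform_measure lborel {0..1::real}) a" .
  qed
qed

lemma U_coord:
  fixes g :: "real \<Rightarrow> ennreal"
  assumes g: "g \<in> borel_measurable borel"
  shows "(\<integral>\<^sup>+ x. g (x $ i) \<partial>uniform_measure lborel (cbox (0::real^'n) One))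
       = (\<integral>\<^sup>+ t. g t * indicator {0..1} t \<partial>lborel)"
proof -
  have "(\<integral>\<^sup>+ x. g (x $ i) \<partial>uniform_measure lborel (cbox (0::real^'n) One))
      = (\<integral>\<^sup>+ t. g t \<partial>distr (uniform_measure lborel (cbox (0::real^'n) One)) lborel (\<lambda>x. x $ i))"
    by (rule nn_integral_distr[symmetric, OF nth_meas_U]) (simp add: g)
  also have "\<dots> = (\<integral>\<^sup>+ t. g t \<partial>uniform_measure lborel {0..1::real})" by (simp only: U_marg)
  also have "\<dots> = (\<integral>\<^sup>+ t. g t * indicator {0..1} t \<partial>lborel) / emeasure lborel {0..1::real}"
    by (rule nn_integral_uniform_measure) (simp_all add: g)
  also have "\<dots> = (\<integral>\<^sup>+ t. g t * indicator {0..1} t \<partial>lborel)" by (simp add: divide_ennreal_def)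
  finally show ?thesis .
qed

lemma UU_sets: "sets (uniform_measure lborel (cbox (0::real^'n) One) \<Otimes>\<^sub>M uniform_measure lborel (cbox (0::real^'n) One))
   = sets (borel::((real^'n) \<times> (real^'n)) measure)"
  by (metis borel_prod sets_lborel sets_pair_measure_cong sets_uniform_measure)

lemma cont_meas: "continuous_on UNIV f \<Longrightarrow> g \<in> borel_measurable borel \<Longrightarrow> (\<lambda>x. g (f x)) \<in> borel_measurable borel"
  using measurable_comp[OF borel_measurable_continuous_onI] by (simp add: comp_def) blast

lemma UU_pair:
  fixes h :: "real \<Rightarrow> real \<Rightarrow> ennreal"
  assumes h: "case_prod h \<in> borel_measurable borel"
  shows "(\<integral>\<^sup>+ z. h (fst z $ i) (snd z $ i) \<partial>(uniform_measure lborel (cbox (0::real^'n) One) \<Otimes>\<^sub>M uniform_measure lborel (cbox (0::real^'n) One)))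
     = (\<integral>\<^sup>+ s. (\<integral>\<^sup>+ t. h s t * indicator {0..1} t \<partial>lborel) * indicator {0..1} s \<partial>lborel)"
proof -
  let ?U = "uniform_measure lborel (cbox (0::real^'n) One)"
  interpret U: prob_space ?U by (rule U_prob)
  have m0: "(\<lambda>z::(real^'n) \<times> (real^'n). h (fst z $ i) (snd z $ i)) \<in> borel_measurable borel"
    using cont_meas[of "\<lambda>z::(real^'n) \<times> (real^'n). (fst z $ i, snd z $ i)" "case_prod h"] h
    by (simp add: continuous_intros)
  have m: "(\<lambda>z. h (fst z $ i) (snd z $ i)) \<in> borel_measurable (?U \<Otimes>\<^sub>M ?U)"
    using m0 by (simp add: measurable_cong_sets[OF UU_sets refl])
  have hs: "h s \<in> borel_measurable borel" for s
    using cont_meas[of "\<lambda>t::real. (s, t)" "case_prod h"] h by (simp add: continuous_intros)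
  have H: "(\<lambda>s. \<integral>\<^sup>+ t. h s t * indicator {0..1} t \<partial>lborel) \<in> borel_measurable borel"
  proof -
    have "(\<lambda>(s, t). h s t * indicator {0..1} t) \<in> borel_measurable (borel \<Otimes>\<^sub>M lborel)"
    proof -
      have "(\<lambda>z::real\<times>real. h (fst z) (snd z) * indicator {0..1} (snd z)) \<in> borel_measurable borel"
      proof (rule borel_measurable_times_ennreal)
        show "(\<lambda>z::real\<times>real. h (fst z) (snd z)) \<in> borel_measurable borel"
          using h by (simp add: case_prod_beta')
        show "(\<lambda>z::real\<times>real. indicator {0..1} (snd z) :: ennreal) \<in> borel_measurable borel"
          by (rule cont_meas) (simp_all add: continuous_intros)
      qed
      moreover have S: "sets (borel \<Otimes>\<^sub>M lborel) = sets (borel :: (real\<times>real) measure)"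
        by (metis borel_prod sets_lborel sets_pair_measure_cong)
      ultimately show ?thesis
        by (simp add: measurable_cong_sets[OF S refl] case_prod_beta')
    qed
    then show ?thesis using lborel.borel_measurable_nn_integral by simp
  qed
  have "(\<integral>\<^sup>+ z. h (fst z $ i) (snd z $ i) \<partial>(?U \<Otimes>\<^sub>M ?U)) = (\<integral>\<^sup>+ x. \<integral>\<^sup>+ y. h (x $ i) (y $ i) \<partial>?U \<partial>?U)"
    using U.nn_integral_fst[OF m] by simp
  also have "\<dots> = (\<integral>\<^sup>+ x. (\<integral>\<^sup>+ t. h (x $ i) t * indicator {0..1} t \<partial>lborel) \<partial>?U)"
    by (intro nn_integral_cong U_coord hs)
  also have "\<dots> = (\<integral>\<^sup>+ s. (\<integral>\<^sup>+ t. h s t * indicator {0..1} t \<partial>lborel) * indicator {0..1} s \<partial>lborel)"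
    by (rule U_coord[OF H])
  finally show ?thesis .
qed



lemma ftc:
  fixes F f :: "real \<Rightarrow> real"
  assumes "a \<le> b" "\<And>x. (F has_real_derivative f x) (at x)"
  shows "(f has_integral (F b - F a)) {a..b}"
  by (rule fundamental_theorem_of_calculus[OF assms(1)])
     (simp add: has_real_derivative_iff_has_vector_derivative[symmetric] has_field_derivative_at_within assms(2))

lemma nn_interval:
  fixes f :: "real \<Rightarrow> real"
  assumes c: "continuous_on UNIV f" and nn: "\<And>t. t \<in> {a..b} \<Longrightarrow> 0 \<le> f t"
    and I: "(f has_integral I) {a..b}"
  shows "(\<integral>\<^sup>+ t. ennreal (f t) * indicator {a..b} t \<partial>lborel) = ennreal I"
proof -
  let ?g = "\<lambda>t. if t \<in> {a..b} then f t else 0"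
  have "(\<integral>\<^sup>+ t. ennreal (f t) * indicator {a..b} t \<partial>lborel) = (\<integral>\<^sup>+ t. ennreal (?g t) \<partial>lborel)"
    by (intro nn_integral_cong) (simp split: split_indicator)
  also have "\<dots> = ennreal I"
  proof (rule nn_integral_has_integral_lborel)
    show "?g \<in> borel_measurable borel"
      using borel_measurable_continuous_onI[OF c] by measurable
    show "0 \<le> ?g x" for x using nn by simp
    show "(?g has_integral I) UNIV" by (subst has_integral_restrict_UNIV) (rule I)
  qed
  finally show ?thesis .
qed

lemma inner_abs:
  assumes s: "s \<in> {0..1::real}"
  shows "(\<integral>\<^sup>+ t. ennreal \<bar>s - t\<bar> * indicator {0..1} t \<partial>lborel) = ennreal (s^2 - s + 1/2)"
proof (rule nn_interval)
  show "continuous_on UNIV (\<lambda>t. \<bar>s - t\<bar>)" by (intro continuous_intros)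
  show "0 \<le> \<bar>s - t\<bar>" for t by simp
  have i1: "((\<lambda>t. \<bar>s - t\<bar>) has_integral ((\<lambda>t. s*t - t^2/2) s - (\<lambda>t. s*t - t^2/2) 0)) {0..s}"
  proof -
    have "((\<lambda>t. s - t) has_integral ((\<lambda>t. s*t - t^2/2) s - (\<lambda>t. s*t - t^2/2) 0)) {0..s}"
      by (rule ftc) (use s in \<open>auto intro!: derivative_eq_intros\<close>)
    then show ?thesis by (rule has_integral_eq[rotated]) auto
  qed
  have i2: "((\<lambda>t. \<bar>s - t\<bar>) has_integral ((\<lambda>t. t^2/2 - s*t) 1 - (\<lambda>t. t^2/2 - s*t) s)) {s..1}"
  proof -
    have "((\<lambda>t. t - s) has_integral ((\<lambda>t. t^2/2 - s*t) 1 - (\<lambda>t. t^2/2 - s*t) s)) {s..1}"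
      by (rule ftc) (use s in \<open>auto intro!: derivative_eq_intros\<close>)
    then show ?thesis by (rule has_integral_eq[rotated]) auto
  qed
  have "((\<lambda>t. \<bar>s - t\<bar>) has_integral (((\<lambda>t. s*t - t^2/2) s - (\<lambda>t. s*t - t^2/2) 0) + ((\<lambda>t. t^2/2 - s*t) 1 - (\<lambda>t. t^2/2 - s*t) s))) {0..1}"
    by (rule has_integral_combine[OF _ _ i1 i2]) (use s in auto)
  then show "((\<lambda>t. \<bar>s - t\<bar>) has_integral (s^2 - s + 1/2)) {0..1}"
    by (simp add: power2_eq_square algebra_simps)
qed

lemma inner_sq:
  shows "(\<integral>\<^sup>+ t. ennreal ((s - t)^2) * indicator {0..1} t \<partial>lborel) = ennreal (s^2 - s + 1/3)"
proof (rule nn_interval)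
  show "continuous_on UNIV (\<lambda>t. (s - t)^2)" by (intro continuous_intros)
  show "0 \<le> (s - t)^2" for t by simp
  have "((\<lambda>t. (s - t)^2) has_integral ((\<lambda>t. (t - s)^3/3) 1 - (\<lambda>t. (t - s)^3/3) 0)) {0..1}"
    by (rule ftc) (auto intro!: derivative_eq_intros simp: power2_eq_square power3_eq_cube field_simps)
  moreover have "(\<lambda>t. (t - s)^3/3) 1 - (\<lambda>t. (t - s)^3/3) 0 = s^2 - s + 1/3"
    by (simp add: power2_eq_square power3_eq_cube field_simps)
  ultimately show "((\<lambda>t. (s - t)^2) has_integral (s^2 - s + 1/3)) {0..1}" by simp
qed

lemma outer_abs: "(\<integral>\<^sup>+ s. ennreal (s^2 - s + 1/2) * indicator {0..1} s \<partial>lborel) = ennreal (1/3)"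
proof (rule nn_interval)
  show "continuous_on UNIV (\<lambda>s::real. s^2 - s + 1/2)" by (intro continuous_intros)
  show "0 \<le> s^2 - s + 1/2" for s :: real
    using sum_power2_ge_zero[of "s - 1/2" 0] by (simp add: power2_eq_square algebra_simps)
  have "((\<lambda>s::real. s^2 - s + 1/2) has_integral ((\<lambda>s. s^3/3 - s^2/2 + s/2) 1 - (\<lambda>s. s^3/3 - s^2/2 + s/2) 0)) {0..1}"
    by (rule ftc) (auto intro!: derivative_eq_intros simp: power2_eq_square power3_eq_cube algebra_simps)
  then show "((\<lambda>s::real. s^2 - s + 1/2) has_integral (1/3)) {0..1}" by simp
qed

lemma outer_sq: "(\<integral>\<^sup>+ s. ennreal (s^2 - s + 1/3) * indicator {0..1} s \<partial>lborel) = ennreal (1/6)"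
proof (rule nn_interval)
  show "continuous_on UNIV (\<lambda>s::real. s^2 - s + 1/3)" by (intro continuous_intros)
  show "0 \<le> s^2 - s + 1/3" for s :: real
    using sum_power2_ge_zero[of "s - 1/2" 0] by (simp add: power2_eq_square algebra_simps)
  have "((\<lambda>s::real. s^2 - s + 1/3) has_integral ((\<lambda>s. s^3/3 - s^2/2 + s/3) 1 - (\<lambda>s. s^3/3 - s^2/2 + s/3) 0)) {0..1}"
    by (rule ftc) (auto intro!: derivative_eq_intros simp: power2_eq_square power3_eq_cube algebra_simps)
  then show "((\<lambda>s::real. s^2 - s + 1/3) has_integral (1/6)) {0..1}" by simp
qed



lemma meas_cont:
  fixes f :: "'a::topological_space \<Rightarrow> real"
  assumes "sets M = sets borel" "continuous_on UNIV f"
  shows "(\<lambda>z. ennreal (f z)) \<in> borel_measurable M"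
proof -
  have "(\<lambda>z. ennreal (f z)) \<in> borel_measurable borel"
    using borel_measurable_continuous_onI[OF assms(2)] by measurable
  then show ?thesis by (simp add: measurable_cong_sets[OF assms(1) refl])
qed

lemma E_abs:
  assumes c: "0 \<le> c"
  shows "(\<integral>\<^sup>+ z. ennreal (c * \<bar>fst z $ i - snd z $ i\<bar>) \<partial>(uniform_measure lborel (cbox (0::real^'n) One) \<Otimes>\<^sub>M uniform_measure lborel (cbox (0::real^'n) One)))
     = ennreal (c / 3)"
proof -
  let ?P = "uniform_measure lborel (cbox (0::real^'n) One) \<Otimes>\<^sub>M uniform_measure lborel (cbox (0::real^'n) One)"
  have "(\<integral>\<^sup>+ z. ennreal (c * \<bar>fst z $ i - snd z $ i\<bar>) \<partial>?P) = (\<integral>\<^sup>+ z. ennreal c * ennreal \<bar>fst z $ i - snd z $ i\<bar> \<partial>?P)"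
    using c by (simp add: ennreal_mult)
  also have "\<dots> = ennreal c * (\<integral>\<^sup>+ z. ennreal \<bar>fst z $ i - snd z $ i\<bar> \<partial>?P)"
    by (rule nn_integral_cmult) (rule meas_cont[OF UU_sets], intro continuous_intros)
  also have "(\<integral>\<^sup>+ z. ennreal \<bar>fst z $ i - snd z $ i\<bar> \<partial>?P)
     = (\<integral>\<^sup>+ s. (\<integral>\<^sup>+ t. ennreal \<bar>s - t\<bar> * indicator {0..1} t \<partial>lborel) * indicator {0..1} s \<partial>lborel)"
  proof (rule UU_pair[where h="\<lambda>s t. ennreal \<bar>s - t\<bar>"])
    show "(\<lambda>(s, t). ennreal \<bar>s - t\<bar>) \<in> borel_measurable borel"
      using meas_cont[of borel "\<lambda>z::real\<times>real. \<bar>fst z - snd z\<bar>"] by (simp add: case_prod_beta' continuous_intros)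
  qed
  also have "\<dots> = (\<integral>\<^sup>+ s. ennreal (s^2 - s + 1/2) * indicator {0..1} s \<partial>lborel)"
    by (intro nn_integral_cong) (simp add: inner_abs split: split_indicator)
  also have "\<dots> = ennreal (1/3)" by (rule outer_abs)
  finally show ?thesis using c by (simp add: ennreal_mult[symmetric])
qed

lemma E_sq:
  assumes c: "0 \<le> c"
  shows "(\<integral>\<^sup>+ z. ennreal (c * (fst z $ i - snd z $ i)^2) \<partial>(uniform_measure lborel (cbox (0::real^'n) One) \<Otimes>\<^sub>M uniform_measure lborel (cbox (0::real^'n) One)))
     = ennreal (c / 6)"
proof -
  let ?P = "uniform_measure lborel (cbox (0::real^'n) One) \<Otimes>\<^sub>M uniform_measure lborel (cbox (0::real^'n) One)"
  have "(\<integral>\<^sup>+ z. ennreal (c * (fst z $ i - snd z $ i)^2) \<partial>?P) = (\<integral>\<^sup>+ z. ennreal c * ennreal ((fst z $ i - snd z $ i)^2) \<partial>?P)"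
    using c by (simp add: ennreal_mult)
  also have "\<dots> = ennreal c * (\<integral>\<^sup>+ z. ennreal ((fst z $ i - snd z $ i)^2) \<partial>?P)"
    by (rule nn_integral_cmult) (rule meas_cont[OF UU_sets], intro continuous_intros)
  also have "(\<integral>\<^sup>+ z. ennreal ((fst z $ i - snd z $ i)^2) \<partial>?P)
     = (\<integral>\<^sup>+ s. (\<integral>\<^sup>+ t. ennreal ((s - t)^2) * indicator {0..1} t \<partial>lborel) * indicator {0..1} s \<partial>lborel)"
  proof (rule UU_pair[where h="\<lambda>s t. ennreal ((s - t)^2)"])
    show "(\<lambda>(s, t). ennreal ((s - t)^2)) \<in> borel_measurable borel"
      using meas_cont[of borel "\<lambda>z::real\<times>real. (fst z - snd z)^2"] by (simp add: case_prod_beta' continuous_intros)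
  qed
  also have "\<dots> = (\<integral>\<^sup>+ s. ennreal (s^2 - s + 1/3) * indicator {0..1} s \<partial>lborel)"
    by (intro nn_integral_cong) (simp add: inner_sq split: split_indicator)
  also have "\<dots> = ennreal (1/6)" by (rule outer_sq)
  finally show ?thesis using c by (simp add: ennreal_mult[symmetric])
qed

lemma sum_abs_le_dist:
  fixes x y :: "real^'n"
  shows "(\<Sum>i\<in>UNIV. \<bar>x $ i - y $ i\<bar>) \<le> sqrt (real CARD('n)) * dist x y"
proof -
  have "(\<Sum>i\<in>UNIV. \<bar>x $ i - y $ i\<bar>) = (\<Sum>i\<in>UNIV. \<bar>dist (x $ i) (y $ i)\<bar> * \<bar>(\<lambda>_. 1::real) i\<bar>)"
    by (simp add: dist_real_def)
  also have "\<dots> \<le> L2_set (\<lambda>i. dist (x $ i) (y $ i)) UNIV * L2_set (\<lambda>_::'n. 1::real) UNIV"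
    using L2_set_mult_ineq[where f="\<lambda>i. dist (x $ i) (y $ i)" and g="\<lambda>_. 1::real" and A=UNIV] by simp
  also have "\<dots> = dist x y * sqrt (real CARD('n))"
    by (simp add: dist_vec_def L2_set_constant)
  finally show ?thesis by (simp add: mult.commute)
qed

lemma dist_sq:
  fixes x y :: "real^'n"
  shows "(dist x y)^2 = (\<Sum>i\<in>UNIV. (x $ i - y $ i)^2)"
  by (simp add: dist_vec_def L2_set_def dist_real_def sum_nonneg)

abbreviation "UU \<equiv> uniform_measure lborel (cbox (0::real^'n) One) \<Otimes>\<^sub>M uniform_measure lborel (cbox (0::real^'n) One)"

lemma D_low:
  "ennreal (sqrt (real CARD('n)) / 3) \<le> (\<integral>\<^sup>+ z. ennreal (dist (fst z) (snd z)) \<partial>(UU::((real^'n) \<times> (real^'n)) measure))"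
proof -
  let ?n = "real CARD('n)"
  let ?c = "1 / sqrt ?n"
  have n0: "0 < ?n" by simp
  have "ennreal (sqrt ?n / 3) = (\<Sum>i\<in>(UNIV::'n set). ennreal (?c / 3))"
  proof -
    have "(\<Sum>i\<in>(UNIV::'n set). ennreal (?c / 3)) = of_nat CARD('n) * ennreal (?c / 3)" by simp
    also have "\<dots> = ennreal (?n * (?c / 3))" by (simp add: ennreal_of_nat_eq_real_of_nat flip: ennreal_mult)
    also have "?n * (?c / 3) = sqrt ?n / 3" using n0 by (simp add: field_simps real_sqrt_mult[symmetric] sqrt_divide_self_eq)
    finally show ?thesis by simp
  qed
  also have "\<dots> = (\<Sum>i\<in>(UNIV::'n set). \<integral>\<^sup>+ z. ennreal (?c * \<bar>fst z $ i - snd z $ i\<bar>) \<partial>(UU::((real^'n) \<times> (real^'n)) measure))"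
    by (intro sum.cong refl E_abs[symmetric]) simp
  also have "\<dots> = (\<integral>\<^sup>+ z. (\<Sum>i\<in>UNIV. ennreal (?c * \<bar>fst z $ i - snd z $ i\<bar>)) \<partial>(UU::((real^'n) \<times> (real^'n)) measure))"
    by (rule nn_integral_sum[symmetric]) (rule meas_cont[OF UU_sets], intro continuous_intros)
  also have "\<dots> \<le> (\<integral>\<^sup>+ z. ennreal (dist (fst z) (snd z)) \<partial>(UU::((real^'n) \<times> (real^'n)) measure))"
  proof (intro nn_integral_mono)
    fix z :: "(real^'n) \<times> (real^'n)"
    have "(\<Sum>i\<in>UNIV. ennreal (?c * \<bar>fst z $ i - snd z $ i\<bar>)) = ennreal (?c * (\<Sum>i\<in>UNIV. \<bar>fst z $ i - snd z $ i\<bar>))"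
      by (simp add: sum_distrib_left)
    also have "\<dots> \<le> ennreal (dist (fst z) (snd z))"
    proof (rule ennreal_leI)
      have "?c * (\<Sum>i\<in>UNIV. \<bar>fst z $ i - snd z $ i\<bar>) \<le> ?c * (sqrt ?n * dist (fst z) (snd z))"
        by (intro mult_left_mono sum_abs_le_dist) simp
      also have "\<dots> = dist (fst z) (snd z)" using n0 by simp
      finally show "?c * (\<Sum>i\<in>UNIV. \<bar>fst z $ i - snd z $ i\<bar>) \<le> dist (fst z) (snd z)" .
    qed
    finally show "(\<Sum>i\<in>UNIV. ennreal (?c * \<bar>fst z $ i - snd z $ i\<bar>)) \<le> ennreal (dist (fst z) (snd z))" .
  qed
  finally show ?thesis .
qed

lemma D_up:
  "(\<integral>\<^sup>+ z. ennreal (dist (fst z) (snd z)) \<partial>(UU::((real^'n) \<times> (real^'n)) measure)) \<le> ennreal (sqrt (real CARD('n) / 6))"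
proof -
  let ?n = "real CARD('n)"
  define a where "a = sqrt (?n / 6)"
  have a0: "0 < a" unfolding a_def by simp
  have a2: "a^2 = ?n / 6" unfolding a_def by simp
  let ?c = "1 / (2 * a)"
  have P: "prob_space (UU::((real^'n) \<times> (real^'n)) measure)" by (intro prob_space_pair U_prob)
  have "(\<integral>\<^sup>+ z. ennreal (dist (fst z) (snd z)) \<partial>(UU::((real^'n) \<times> (real^'n)) measure))
     \<le> (\<integral>\<^sup>+ z. (\<Sum>i\<in>UNIV. ennreal (?c * (fst z $ i - snd z $ i)^2)) + ennreal (a / 2) \<partial>(UU::((real^'n) \<times> (real^'n)) measure))"
  proof (intro nn_integral_mono)
    fix z :: "(real^'n) \<times> (real^'n)"
    let ?d = "dist (fst z) (snd z)"
    have "?d \<le> ?c * (\<Sum>i\<in>UNIV. (fst z $ i - snd z $ i)^2) + a / 2"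
    proof -
      have "0 \<le> (?d - a)^2" by simp
      then have "2 * a * ?d \<le> ?d^2 + a^2" by (simp add: power2_eq_square algebra_simps)
      then have "?d \<le> (?d^2 + a^2) / (2 * a)" using a0 by (simp add: field_simps)
      also have "\<dots> = ?c * ?d^2 + a / 2" using a0 by (simp add: field_simps power2_eq_square)
      finally show ?thesis by (simp add: dist_sq)
    qed
    then have "ennreal ?d \<le> ennreal (?c * (\<Sum>i\<in>UNIV. (fst z $ i - snd z $ i)^2) + a / 2)" by (rule ennreal_leI)
    also have "\<dots> = (\<Sum>i\<in>UNIV. ennreal (?c * (fst z $ i - snd z $ i)^2)) + ennreal (a / 2)"
    proof -
      have nn: "0 \<le> ?c * (fst z $ i - snd z $ i)^2" for i using a0 by simp
      have "(\<Sum>i\<in>UNIV. ennreal (?c * (fst z $ i - snd z $ i)^2)) = ennreal (\<Sum>i\<in>UNIV. ?c * (fst z $ i - snd z $ i)^2)"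
        by (rule sum_ennreal) (rule nn)
      moreover have "ennreal (?c * (\<Sum>i\<in>UNIV. (fst z $ i - snd z $ i)^2) + a / 2) = ennreal (?c * (\<Sum>i\<in>UNIV. (fst z $ i - snd z $ i)^2)) + ennreal (a / 2)"
        by (rule ennreal_plus) (use a0 in \<open>simp_all add: sum_nonneg\<close>)
      ultimately show ?thesis by (simp add: sum_distrib_left)
    qed
    finally show "ennreal ?d \<le> (\<Sum>i\<in>UNIV. ennreal (?c * (fst z $ i - snd z $ i)^2)) + ennreal (a / 2)" .
  qed
  also have "\<dots> = (\<integral>\<^sup>+ z. (\<Sum>i\<in>UNIV. ennreal (?c * (fst z $ i - snd z $ i)^2)) \<partial>(UU::((real^'n) \<times> (real^'n)) measure)) + ennreal (a / 2)"
  proof (subst nn_integral_add)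
    show "(\<lambda>z. \<Sum>i\<in>UNIV. ennreal (?c * (fst z $ i - snd z $ i)^2)) \<in> borel_measurable (UU::((real^'n) \<times> (real^'n)) measure)"
      by (intro borel_measurable_sum meas_cont[OF UU_sets] continuous_intros)
  qed (use prob_space.emeasure_space_1[OF P] in simp_all)
  also have "(\<integral>\<^sup>+ z. (\<Sum>i\<in>UNIV. ennreal (?c * (fst z $ i - snd z $ i)^2)) \<partial>(UU::((real^'n) \<times> (real^'n)) measure))
     = (\<Sum>i\<in>(UNIV::'n set). \<integral>\<^sup>+ z. ennreal (?c * (fst z $ i - snd z $ i)^2) \<partial>(UU::((real^'n) \<times> (real^'n)) measure))"
    by (rule nn_integral_sum) (rule meas_cont[OF UU_sets], intro continuous_intros)
  also have "\<dots> = (\<Sum>i\<in>(UNIV::'n set). ennreal (?c / 6))"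
    by (intro sum.cong refl E_sq) (use a0 in simp)
  also have "\<dots> + ennreal (a / 2) = ennreal (?n * (?c / 6) + a / 2)"
  proof -
    have "(\<Sum>i\<in>(UNIV::'n set). ennreal (?c / 6)) = of_nat CARD('n) * ennreal (?c / 6)" by simp
    also have "\<dots> = ennreal (?n * (?c / 6))" using a0 by (simp add: ennreal_of_nat_eq_real_of_nat flip: ennreal_mult)
    finally show ?thesis using a0 by (simp add: ennreal_plus)
  qed
  also have "?n * (?c / 6) + a / 2 = a"
  proof -
    have "?n = 6 * a^2" using a2 by simp
    then show ?thesis using a0 by (simp add: field_simps power2_eq_square)
  qed
  finally show ?thesis unfolding a_def .
qed



lemma cont_meas2:
  assumes "sets M = sets borel" "sets N = sets borel" "continuous_on UNIV f"
  shows "f \<in> measurable M N"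
  using borel_measurable_continuous_onI[OF assms(3)]
  by (simp add: measurable_cong_sets[OF assms(1) assms(2)])

lemma dist_tri4:
  fixes a b c d :: "'a::metric_space"
  shows "dist c d \<le> (dist a c + dist b d) + dist a b"
proof -
  have "dist c d \<le> dist c a + dist a d" by (rule dist_triangle)
  also have "dist a d \<le> dist a b + dist b d" by (rule dist_triangle)
  finally show ?thesis by (simp add: dist_commute)
qed

lemma eVar_ge:
  fixes U :: "(real^'n) measure"
  defines "U \<equiv> uniform_measure lborel (cbox 0 One)"
  shows "(\<integral>\<^sup>+ z. ennreal (dist (fst z) (snd z)) \<partial>(U \<Otimes>\<^sub>M U)) \<le> eVar U"
proof -
  let ?P = "U \<Otimes>\<^sub>M U"
  let ?mu = "distr U (U \<Otimes>\<^sub>M U) (\<lambda>x. (x, x))"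
  have sU: "sets U = sets borel" unfolding U_def by simp
  have sP: "sets ?P = sets borel" unfolding U_def by (rule UU_sets)
  have smu: "sets ?mu = sets borel" using sP by simp
  have sG: "sets (?mu \<Otimes>\<^sub>M ?P) = sets (borel :: (((real^'n) \<times> (real^'n)) \<times> ((real^'n) \<times> (real^'n))) measure)"
  proof -
    have "sets (?mu \<Otimes>\<^sub>M ?P) = sets (borel \<Otimes>\<^sub>M borel)" by (rule sets_pair_measure_cong[OF smu sP])
    also have "\<dots> = sets (borel :: (((real^'n) \<times> (real^'n)) \<times> ((real^'n) \<times> (real^'n))) measure)"
      by (simp only: borel_prod)
    finally show ?thesis .
  qed
  have diag: "(\<lambda>x::real^'n. (x, x)) \<in> measurable U ?P"
    by (rule cont_meas2[OF sU sP]) (intro continuous_intros)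
  show ?thesis
    unfolding eVar_def emd_def
  proof (rule INF_greatest)
    fix g assume "g \<in> couplings ?mu ?P"
    then have sg: "sets g = sets (?mu \<Otimes>\<^sub>M ?P)" and m1: "distr g ?mu fst = ?mu" and m2: "distr g ?P snd = ?P"
      unfolding couplings_def by auto
    have sg': "sets g = sets borel" using sg sG by simp
    let ?A = "\<lambda>z::((real^'n) \<times> (real^'n)) \<times> ((real^'n) \<times> (real^'n)). ennreal (dist (fst (fst z)) (snd (fst z)))"
    let ?B = "\<lambda>z::((real^'n) \<times> (real^'n)) \<times> ((real^'n) \<times> (real^'n)). ennreal (dist (fst (snd z)) (snd (snd z)))"
    let ?C = "\<lambda>z::((real^'n) \<times> (real^'n)) \<times> ((real^'n) \<times> (real^'n)). ennreal (dpair (fst z) (snd z))"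
    have mA: "?A \<in> borel_measurable g" by (rule meas_cont[OF sg']) (intro continuous_intros)
    have mC: "?C \<in> borel_measurable g" unfolding dpair_def by (rule meas_cont[OF sg']) (intro continuous_intros)
    have fstm: "fst \<in> measurable g ?mu" by (rule cont_meas2[OF sg' smu]) (intro continuous_intros)
    have sndm: "snd \<in> measurable g ?P" by (rule cont_meas2[OF sg' sP]) (intro continuous_intros)
    have dm: "(\<lambda>p. ennreal (dist (fst p) (snd p))) \<in> borel_measurable ?P"
      by (rule meas_cont[OF sP]) (intro continuous_intros)
    have dmu: "(\<lambda>p. ennreal (dist (fst p) (snd p))) \<in> borel_measurable ?mu"
      by (rule meas_cont[OF smu]) (intro continuous_intros)
    have "(\<integral>\<^sup>+ z. ennreal (dist (fst z) (snd z)) \<partial>?P) = (\<integral>\<^sup>+ p. ennreal (dist (fst p) (snd p)) \<partial>distr g ?P snd)"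
      using m2 by simp
    also have "\<dots> = (\<integral>\<^sup>+ z. ?B z \<partial>g)"
      by (rule nn_integral_distr[OF sndm]) (use dm m2 in simp)
    also have "\<dots> \<le> (\<integral>\<^sup>+ z. ?C z + ?A z \<partial>g)"
    proof (rule nn_integral_mono)
      fix z :: "((real^'n) \<times> (real^'n)) \<times> ((real^'n) \<times> (real^'n))"
      show "?B z \<le> ?C z + ?A z"
      proof -
        obtain a b c d where z: "z = ((a, b), (c, d))" by (metis prod.collapse)
        have "ennreal (dist c d) \<le> ennreal ((dist a c + dist b d) + dist a b)"
          by (rule ennreal_leI) (rule dist_tri4)
        also have "\<dots> = ennreal (dist a c + dist b d) + ennreal (dist a b)" by (rule ennreal_plus) simp_all
        finally show ?thesis unfolding z dpair_def by simp
      qed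
    qed
    also have "\<dots> = (\<integral>\<^sup>+ z. ?C z \<partial>g) + (\<integral>\<^sup>+ z. ?A z \<partial>g)"
      by (rule nn_integral_add[OF mC mA])
    also have "(\<integral>\<^sup>+ z. ?A z \<partial>g) = (\<integral>\<^sup>+ p. ennreal (dist (fst p) (snd p)) \<partial>distr g ?mu fst)"
      by (rule nn_integral_distr[OF fstm, symmetric]) (use dmu m1 in simp)
    also have "\<dots> = (\<integral>\<^sup>+ p. ennreal (dist (fst p) (snd p)) \<partial>?mu)" using m1 by simp
    also have "\<dots> = (\<integral>\<^sup>+ x. ennreal (dist x x) \<partial>U)"
      by (subst nn_integral_distr[OF diag]) (use dm in simp_all)
    also have "\<dots> = 0" by simp
    finally show "(\<integral>\<^sup>+ z. ennreal (dist (fst z) (snd z)) \<partial>?P) \<le> (\<integral>\<^sup>+ z. ?C z \<partial>g)" by simp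
  qed
qed

lemma eVar_le:
  fixes U :: "(real^'n) measure"
  defines "U \<equiv> uniform_measure lborel (cbox 0 One)"
  shows "eVar U \<le> (\<integral>\<^sup>+ z. ennreal (dist (fst z) (snd z)) \<partial>(U \<Otimes>\<^sub>M U))"
proof -
  let ?P = "U \<Otimes>\<^sub>M U"
  let ?mu = "distr U (U \<Otimes>\<^sub>M U) (\<lambda>x. (x, x))"
  interpret U: prob_space U unfolding U_def by (rule U_prob)
  have Pp: "prob_space ?P" by (intro prob_space_pair U.prob_space_axioms)
  have sU: "sets U = sets borel" unfolding U_def by simp
  have sP: "sets ?P = sets borel" unfolding U_def by (rule UU_sets)
  have smu: "sets ?mu = sets borel" using sP by simp
  have sG: "sets (?mu \<Otimes>\<^sub>M ?P) = sets (borel :: (((real^'n) \<times> (real^'n)) \<times> ((real^'n) \<times> (real^'n))) measure)"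
  proof -
    have "sets (?mu \<Otimes>\<^sub>M ?P) = sets (borel \<Otimes>\<^sub>M borel)" by (rule sets_pair_measure_cong[OF smu sP])
    also have "\<dots> = sets (borel :: (((real^'n) \<times> (real^'n)) \<times> ((real^'n) \<times> (real^'n))) measure)"
      by (simp only: borel_prod)
    finally show ?thesis .
  qed
  have diag: "(\<lambda>x::real^'n. (x, x)) \<in> measurable U ?P"
    by (rule cont_meas2[OF sU sP]) (intro continuous_intros)
  let ?h = "\<lambda>z::(real^'n) \<times> (real^'n). ((fst z, fst z), z)"
  have hm: "?h \<in> measurable ?P (?mu \<Otimes>\<^sub>M ?P)"
    by (rule cont_meas2[OF sP sG]) (intro continuous_intros)
  define g where "g = distr ?P (?mu \<Otimes>\<^sub>M ?P) ?h"
  have fstm: "fst \<in> measurable (?mu \<Otimes>\<^sub>M ?P) ?mu" by (rule measurable_fst)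
  have sndm: "snd \<in> measurable (?mu \<Otimes>\<^sub>M ?P) ?P" by (rule measurable_snd)
  have fstP: "fst \<in> measurable ?P U" by (rule measurable_fst)
  have "g \<in> couplings ?mu ?P"
    unfolding couplings_def mem_Collect_eq
  proof (intro conjI)
    show "sets g = sets (?mu \<Otimes>\<^sub>M ?P)" unfolding g_def by simp
    show "prob_space g" unfolding g_def by (rule prob_space.prob_space_distr[OF Pp hm])
    have "distr g ?mu fst = distr ?P ?mu (fst \<circ> ?h)" unfolding g_def by (rule distr_distr[OF fstm hm])
    also have "\<dots> = distr ?P ?P ((\<lambda>x. (x, x)) \<circ> fst)"
      by (rule distr_cong) (simp_all add: comp_def)
    also have "\<dots> = distr (distr ?P U fst) ?P (\<lambda>x. (x, x))" by (rule distr_distr[OF diag fstP, symmetric])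
    also have "distr ?P U fst = U" by (rule U.distr_pair_fst)
    finally show "distr g ?mu fst = ?mu" .
    have "distr g ?P snd = distr ?P ?P (snd \<circ> ?h)" unfolding g_def by (rule distr_distr[OF sndm hm])
    also have "\<dots> = distr ?P ?P (\<lambda>x. x)" by (rule distr_cong) (simp_all add: comp_def)
    finally show "distr g ?P snd = ?P" by simp
  qed
  then have "eVar U \<le> (\<integral>\<^sup>+ z. ennreal (dpair (fst z) (snd z)) \<partial>g)"
    unfolding eVar_def emd_def by (rule INF_lower)
  also have "\<dots> = (\<integral>\<^sup>+ z. ennreal (dpair (fst (?h z)) (snd (?h z))) \<partial>?P)"
    unfolding g_def
  proof (rule nn_integral_distr[OF hm])
    have sG': "sets (distr ?P (?mu \<Otimes>\<^sub>M ?P) ?h) = sets borel" using sG by simp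
    show "(\<lambda>z. ennreal (dpair (fst z) (snd z))) \<in> borel_measurable (distr ?P (?mu \<Otimes>\<^sub>M ?P) ?h)"
      unfolding dpair_def by (rule meas_cont[OF sG']) (intro continuous_intros)
  qed
  also have "\<dots> = (\<integral>\<^sup>+ z. ennreal (dist (fst z) (snd z)) \<partial>?P)"
    by (simp add: dpair_def)
  finally show ?thesis .
qed

theorem mainTheorem9:
  fixes U :: "(real ^ 'n) measure"
  assumes "U = uniform_measure lborel (cbox 0 One)"
  shows "ennreal (sqrt (real CARD('n)) / 3) \<le> eVar U \<and>
         eVar U \<le> ennreal (sqrt (real CARD('n) / 6))"
proof
  show "ennreal (sqrt (real CARD('n)) / 3) \<le> eVar U"
    using D_low[where 'n='n] eVar_ge[where 'n='n] assms by (blast intro: order.trans)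
  show "eVar U \<le> ennreal (sqrt (real CARD('n) / 6))"
    using D_up[where 'n='n] eVar_le[where 'n='n] assms by (blast intro: order.trans)
qed

end
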